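(* Let $q \geq 5$ be a prime power and let $\mathcal{X}$ be a plane curve of degree $q-1$ defined over $\mathbb{F}_q$ without $\mathbb{F}_q$-linear components with $\mathrm{N}_q(\mathcal{X}) = (q-1)^2$. Fix a point $Q_0 \in Z(\mathcal{X})$ and an $\mathbb{F}_q$-line $l_\infty$ not passing through $Q_0$. Suppose there are $\mathbb{F}_q$-lines $l_1, \dots, l_t$ through $Q_0$, with $2 \le t \le q-1$, such that $l_i(\mathbb{F}_q) \setminus (\{Q_0\} \cup l_\infty) \subseteq \mathcal{X}(\mathbb{F}_q)$ for $i=1,\dots,t$. Let $l$ be an $\mathbb{F}_q$-line through $Q_0$ different from $l_1,\dots,l_t$. If $\#\big((l \setminus l_\infty)(\mathbb{F}_q) \cap \mathcal{X}(\mathbb{F}_q)\big) \geq q - t$, then $l(\mathbb{F}_q) \setminus (\{Q_0\} \cup l_\infty(\mathbb{F}_q)) \subseteq \mathcal{X}(\mathbb{F}_q)$.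
   Context: $\mathcal{X}(\mathbb{F}_q)=\mathcal{X}\cap\mathbb{P}^2(\mathbb{F}_q)$, $\mathrm{N}_q(\mathcal{X})=\#\mathcal{X}(\mathbb{F}_q)$; "without $\mathbb{F}_q$-linear components" means no line defined over $\mathbb{F}_q$ is a component. $Z(\mathcal{X}) := \mathbb{P}^2(\mathbb{F}_q) \setminus \mathcal{X}(\mathbb{F}_q)$. For a line $l$, $l(\mathbb{F}_q)$ is its set of $\mathbb{F}_q$-rational points. *)

theory Defs
  imports Main
begin

(* A homogeneous polynomial of degree d in X,Y,Z over a field 'a is represented by
   its coefficient function F, where F i j is the coefficient of X^i Y^j Z^(d-i-j)
   (only the values with i + j <= d are relevant). *)

definition hom_eval :: "nat \<Rightarrow> (nat \<Rightarrow> nat \<Rightarrow> 'a::field) \<Rightarrow> 'a \<times> 'a \<times> 'a \<Rightarrow> 'a" where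
  "hom_eval d F v = (case v of (x, y, z) \<Rightarrow>
     (\<Sum>i\<le>d. \<Sum>j\<le>d - i. F i j * x ^ i * y ^ j * z ^ (d - i - j)))"

definition hom_nonzero :: "nat \<Rightarrow> (nat \<Rightarrow> nat \<Rightarrow> 'a::field) \<Rightarrow> bool" where
  "hom_nonzero d F \<longleftrightarrow> (\<exists>i j. i + j \<le> d \<and> F i j \<noteq> 0)"

(* coefficient of X^i Y^j Z^(d-i-j) in (aX + bY + cZ) * G, G homogeneous of degree d-1 *)
definition lin_times :: "nat \<Rightarrow> 'a::field \<Rightarrow> 'a \<Rightarrow> 'a \<Rightarrow> (nat \<Rightarrow> nat \<Rightarrow> 'a) \<Rightarrow> nat \<Rightarrow> nat \<Rightarrow> 'a" where
  "lin_times d a b c G i j =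
     (if 0 < i then a * G (i - 1) j else 0) +
     (if 0 < j then b * G i (j - 1) else 0) +
     (if i + j \<le> d - 1 then c * G i j else 0)"

definition has_linear_component :: "nat \<Rightarrow> (nat \<Rightarrow> nat \<Rightarrow> 'a::field) \<Rightarrow> bool" where
  "has_linear_component d F \<longleftrightarrow> 1 \<le> d \<and>
     (\<exists>a b c G. (a, b, c) \<noteq> (0, 0, 0) \<and>
        (\<forall>i j. i + j \<le> d \<longrightarrow> F i j = lin_times d a b c G i j))"

definition proj_pt :: "'a::field \<times> 'a \<times> 'a \<Rightarrow> ('a \<times> 'a \<times> 'a) set" where
  "proj_pt v = (case v of (x, y, z) \<Rightarrow> {(c * x, c * y, c * z) | c. c \<noteq> 0})"

definition P2 :: "('a::field \<times> 'a \<times> 'a) set set" where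
  "P2 = proj_pt ` {v. v \<noteq> (0, 0, 0)}"

definition curve_pts :: "nat \<Rightarrow> (nat \<Rightarrow> nat \<Rightarrow> 'a::field) \<Rightarrow> ('a \<times> 'a \<times> 'a) set set" where
  "curve_pts d F = {proj_pt v | v. v \<noteq> (0, 0, 0) \<and> hom_eval d F v = 0}"

definition line_pts :: "'a::field \<Rightarrow> 'a \<Rightarrow> 'a \<Rightarrow> ('a \<times> 'a \<times> 'a) set set" where
  "line_pts a b c = {proj_pt (x, y, z) | x y z. (x, y, z) \<noteq> (0, 0, 0) \<and> a * x + b * y + c * z = 0}"

definition is_fq_line :: "('a::field \<times> 'a \<times> 'a) set set \<Rightarrow> bool" where
  "is_fq_line l \<longleftrightarrow> (\<exists>a b c. (a, b, c) \<noteq> (0, 0, 0) \<and> l = line_pts a b c)"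

end

theory Submission
  imports Defs "HOL-Computational_Algebra.Polynomial"
begin

type_synonym 'a vec3 = "'a \<times> 'a \<times> 'a"

fun dot :: "'a::field vec3 \<Rightarrow> 'a vec3 \<Rightarrow> 'a" where
  "dot (a,b,c) (x,y,z) = a*x+b*y+c*z"
fun cross :: "'a::field vec3 \<Rightarrow> 'a vec3 \<Rightarrow> 'a vec3" where
  "cross (a,b,c) (x,y,z) = (b*z - c*y, c*x - a*z, a*y - b*x)"
fun sm :: "'a::field \<Rightarrow> 'a vec3 \<Rightarrow> 'a vec3" where
  "sm s (x,y,z) = (s*x, s*y, s*z)"
fun vadd :: "'a::field vec3 \<Rightarrow> 'a vec3 \<Rightarrow> 'a vec3" where
  "vadd (a,b,c) (x,y,z) = (a+x, b+y, c+z)"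
fun lp :: "'a::field vec3 \<Rightarrow> 'a vec3 set set" where
  "lp (a,b,c) = line_pts a b c"

lemma lagrange: "cross x (cross A B) = vadd (sm (dot B x) A) (sm (- dot A x) B)"
  by (cases x; cases A; cases B) (simp add: algebra_simps)

lemma lagrange0: "dot A x = 0 \<Longrightarrow> dot B x = 0 \<Longrightarrow> cross x (cross A B) = (0,0,0)"
  unfolding lagrange by (cases A; cases B) simp

lemma cross_anti0: "cross x n = (0,0,0) \<Longrightarrow> cross n x = (0,0,0)"
  by (cases x; cases n) (auto simp: algebra_simps)

lemma dot_cross_self1: "dot L (cross L M) = 0"
  by (cases L; cases M) (simp add: algebra_simps)
lemma dot_cross_self2: "dot M (cross L M) = 0"
  by (cases L; cases M) (simp add: algebra_simps)

lemma LA1: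
  assumes "n \<noteq> (0,0,0)" "cross x n = (0,0,0)"
  shows "\<exists>s. x = sm s n"
proof -
  obtain x1 x2 x3 where x: "x = (x1,x2,x3)" by (cases x)
  obtain n1 n2 n3 where n: "n = (n1,n2,n3)" by (cases n)
  have e: "x2*n3 = x3*n2" "x3*n1 = x1*n3" "x1*n2 = x2*n1" using assms(2) by (auto simp: x n)
  show ?thesis
  proof (cases "n1 \<noteq> 0")
    case True
    show ?thesis
      by (rule exI[of _ "x1/n1"]) (use True e in \<open>auto simp: x n field_simps\<close>)
  next
    case F1: False
    show ?thesis
    proof (cases "n2 \<noteq> 0")
      case True
      show ?thesis
        by (rule exI[of _ "x2/n2"]) (use True F1 e in \<open>auto simp: x n field_simps\<close>)
    next
      case False
      then have "n3 \<noteq> 0" using F1 assms(1) n by auto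
      then show ?thesis
        by (intro exI[of _ "x3/n3"]) (use False F1 e in \<open>auto simp: x n field_simps\<close>)
    qed
  qed
qed

lemma sm_zero_iff: "sm s x = (0,0,0) \<longleftrightarrow> s = 0 \<or> x = (0,0,0)"
  by (cases x) auto

lemma dot_sm: "dot L (sm s x) = s * dot L x"
  by (cases x; cases L) (simp add: algebra_simps)
lemma dot_vadd: "dot L (vadd x y) = dot L x + dot L y"
  by (cases x; cases y; cases L) (simp add: algebra_simps)
lemma dot_sm_l: "dot (sm s L) x = s * dot L x"
  by (cases x; cases L) (simp add: algebra_simps)
lemma vadd_0[simp]: "vadd (0,0,0) x = x"
  by (cases x) simp
lemma sm_sm: "sm a (sm b x) = sm (a*b) x"
  by (cases x) (simp add: algebra_simps)
lemma sm_1[simp]: "sm 1 x = x"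
  by (cases x) simp

lemma LA3:
  assumes "dot L w \<noteq> 0" "dot M w = 0" "M \<noteq> (0,0,0)"
  shows "cross L M \<noteq> (0,0,0)"
proof
  assume "cross L M = (0,0,0)"
  hence "cross M L = (0,0,0)" by (rule cross_anti0)
  moreover have "L \<noteq> (0,0,0)" using assms(1) by (cases w) auto
  ultimately obtain s where "M = sm s L" using LA1 by blast
  hence "s * dot L w = 0" using assms(2) by (simp add: dot_sm_l)
  hence "s = 0" using assms(1) by simp
  thus False using \<open>M = sm s L\<close> assms(3) by (cases L) simp
qed

lemma span_l:
  assumes "dot L w \<noteq> 0" "dot M w = 0" "M \<noteq> (0,0,0)" "dot M v = 0"
  shows "\<exists>s. v = vadd (sm (dot L v / dot L w) w) (sm s (cross L M))"
proof -
  define c where "c = dot L v / dot L w"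
  define v' where "v' = vadd v (sm (-c) w)"
  have "dot L v' = 0" using assms(1) by (simp add: v'_def dot_vadd dot_sm c_def)
  moreover have "dot M v' = 0" using assms by (simp add: v'_def dot_vadd dot_sm)
  ultimately have "cross v' (cross L M) = (0,0,0)" by (rule lagrange0)
  then obtain s where "v' = sm s (cross L M)" using LA1 LA3[OF assms(1-3)] by blast
  hence "v = vadd (sm c w) (sm s (cross L M))" unfolding v'_def
    by (cases v; cases w; cases "cross L M") (auto simp: algebra_simps)
  thus ?thesis unfolding c_def by blast
qed

lemma cramer: "sm (dot w (cross u1 u2)) x =
   vadd (sm (dot x (cross u1 u2)) w) (vadd (sm (dot x (cross u2 w)) u1) (sm (dot x (cross w u1)) u2))"
  by (cases x; cases w; cases u1; cases u2) (simp add: algebra_simps)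

lemma dot_comm: "dot x y = dot y x"
  by (cases x; cases y) (simp add: algebra_simps)

lemma span_ker:
  assumes "dot L w \<noteq> 0" "dot L u1 = 0" "dot L u2 = 0" "u2 \<noteq> (0,0,0)"
    "\<not> (\<exists>s. u1 = sm s u2)" "dot L x = 0"
  shows "\<exists>a b. x = vadd (sm a u1) (sm b u2)"
proof -
  have N: "cross u1 u2 \<noteq> (0,0,0)" using LA1[OF assms(4)] assms(5) by blast
  have "cross L (cross u1 u2) = (0,0,0)" using assms(2,3) by (intro lagrange0) (simp_all add: dot_comm)
  hence "cross (cross u1 u2) L = (0,0,0)" by (rule cross_anti0)
  moreover have "L \<noteq> (0,0,0)" using assms(1) by (cases w) auto
  ultimately obtain s where s: "cross u1 u2 = sm s L" using LA1 by blast
  have "s \<noteq> 0" using N s by (cases L) auto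
  define D where "D = dot w (cross u1 u2)"
  have D: "D \<noteq> 0" using assms(1) \<open>s \<noteq> 0\<close> by (simp add: D_def s dot_sm dot_comm[of w])
  have x0: "dot x (cross u1 u2) = 0" using assms(6) by (simp add: s dot_sm dot_comm[of x])
  have "sm D x = vadd (sm (dot x (cross u2 w)) u1) (sm (dot x (cross w u1)) u2)"
    using cramer[of w u1 u2 x] x0 unfolding D_def by (cases w) simp
  hence "sm (1/D) (sm D x) = sm (1/D) (vadd (sm (dot x (cross u2 w)) u1) (sm (dot x (cross w u1)) u2))"
    by simp
  hence "x = vadd (sm (dot x (cross u2 w) / D) u1) (sm (dot x (cross w u1) / D) u2)"
    using D by (cases x; cases u1; cases u2) (simp add: field_simps)
  thus ?thesis by blast
qed

lemma lp_sm: assumes "c \<noteq> 0" shows "lp (sm c M) = lp M"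
proof -
  obtain a b e where M: "M = (a,b,e)" by (cases M)
  have "\<And>x y z. (c*a*x + c*b*y + c*e*z = 0) = (a*x+b*y+e*z=0)"
  proof -
    fix x y z
    have "c*a*x + c*b*y + c*e*z = c * (a*x+b*y+e*z)" by (simp add: algebra_simps)
    thus "(c*a*x + c*b*y + c*e*z = 0) = (a*x+b*y+e*z=0)" using assms by simp
  qed
  thus ?thesis by (simp add: M line_pts_def)
qed

lemma same_line:
  assumes "dot L w \<noteq> 0" "dot L r = 0" "r \<noteq> (0,0,0)"
    "dot M w = 0" "dot M r = 0" "M \<noteq> (0,0,0)"
    "dot M' w = 0" "dot M' r = 0" "M' \<noteq> (0,0,0)"
  shows "lp M = lp M'"
proof -
  have n: "cross w r \<noteq> (0,0,0)"
  proof
    assume "cross w r = (0,0,0)"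
    then obtain s where "w = sm s r" using LA1 assms(3) by blast
    thus False using assms(1,2) by (simp add: dot_sm)
  qed
  have "cross M (cross w r) = (0,0,0)" using assms(4,5) by (intro lagrange0) (simp_all add: dot_comm)
  then obtain s where s: "M = sm s (cross w r)" using LA1[OF n] by blast
  have "cross M' (cross w r) = (0,0,0)" using assms(7,8) by (intro lagrange0) (simp_all add: dot_comm)
  then obtain s' where s': "M' = sm s' (cross w r)" using LA1[OF n] by blast
  have "s' \<noteq> 0" using s' assms(9) by (cases "cross w r") auto
  have "s \<noteq> 0" using s assms(6) by (cases "cross w r") auto
  have "M = sm (s/s') M'" using \<open>s' \<noteq> 0\<close> by (simp add: s s' sm_sm)
  thus ?thesis using \<open>s \<noteq> 0\<close> \<open>s' \<noteq> 0\<close> by (simp add: lp_sm)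
qed


lemma pp_mem: "x \<in> proj_pt v \<longleftrightarrow> (\<exists>c. c \<noteq> 0 \<and> x = sm c v)"
  by (cases v; cases x) (auto simp: proj_pt_def)

lemma pp_self: "v \<in> proj_pt v"
  unfolding pp_mem by (rule exI[of _ 1]) simp

lemma pp_eq: "proj_pt v = proj_pt v' \<Longrightarrow> \<exists>c. c \<noteq> 0 \<and> v = sm c v'"
  using pp_self[of v] pp_mem by metis

lemma pp_sm: assumes "c \<noteq> 0" shows "proj_pt (sm c v) = proj_pt v"
proof
  show "proj_pt (sm c v) \<subseteq> proj_pt v"
  proof
    fix x assume "x \<in> proj_pt (sm c v)"
    then obtain e where "e \<noteq> 0" "x = sm e (sm c v)" by (auto simp: pp_mem)
    thus "x \<in> proj_pt v" unfolding pp_mem using assms by (intro exI[of _ "e*c"]) (simp add: sm_sm)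
  qed
  show "proj_pt v \<subseteq> proj_pt (sm c v)"
  proof
    fix x assume "x \<in> proj_pt v"
    then obtain e where "e \<noteq> 0" "x = sm e v" by (auto simp: pp_mem)
    hence "x = sm (e / c) (sm c v)" using assms by (simp add: sm_sm)
    thus "x \<in> proj_pt (sm c v)" unfolding pp_mem using \<open>e \<noteq> 0\<close> assms by (intro exI[of _ "e/c"]) simp
  qed
qed

lemma lp_mem: assumes "v \<noteq> (0,0,0)" shows "proj_pt v \<in> lp M \<longleftrightarrow> dot M v = 0"
proof
  assume "proj_pt v \<in> lp M"
  then obtain v' where v': "proj_pt v = proj_pt v'" "dot M v' = 0"
    by (cases M) (auto simp: line_pts_def)
  then obtain c where "v = sm c v'" using pp_eq by blast
  thus "dot M v = 0" using v' by (simp add: dot_sm)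
next
  assume "dot M v = 0"
  thus "proj_pt v \<in> lp M" using assms by (cases M; cases v) (auto simp: line_pts_def)
qed

lemma lp_memE: assumes "P \<in> lp M" obtains v where "v \<noteq> (0,0,0)" "P = proj_pt v" "dot M v = 0"
proof -
  have "\<exists>v. v \<noteq> (0,0,0) \<and> P = proj_pt v \<and> dot M v = 0"
    using assms by (cases M) (simp add: line_pts_def, blast)
  thus ?thesis using that by blast
qed

lemma hom_sm: "hom_eval d F (sm c v) = c^d * hom_eval d F v"
proof -
  obtain x y z where v: "v = (x,y,z)" by (cases v)
  have *: "\<And>i j. i \<le> d \<Longrightarrow> j \<le> d - i \<Longrightarrow>
      F i j * (c*x) ^ i * (c*y) ^ j * (c*z) ^ (d - i - j) = c^d * (F i j * x ^ i * y ^ j * z ^ (d - i - j))"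
  proof -
    fix i j assume "i \<le> d" "j \<le> d - i"
    hence "d = i + j + (d - i - j)" by simp
    hence "c^d = c^i * c^j * c^(d-i-j)" by (metis power_add)
    thus "F i j * (c*x) ^ i * (c*y) ^ j * (c*z) ^ (d - i - j) = c^d * (F i j * x ^ i * y ^ j * z ^ (d - i - j))"
      by (simp add: power_mult_distrib algebra_simps)
  qed
  have "hom_eval d F (sm c v) = (\<Sum>i\<le>d. \<Sum>j\<le>d-i. c^d * (F i j * x^i * y^j * z^(d-i-j)))"
    unfolding v hom_eval_def sm.simps prod.case
    apply (rule sum.cong[OF refl])+
    by (rule *) auto
  thus ?thesis by (simp add: v hom_eval_def sum_distrib_left)
qed

lemma curve_mem: assumes "v \<noteq> (0,0,0)" shows "proj_pt v \<in> curve_pts d F \<longleftrightarrow> hom_eval d F v = 0"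
proof
  assume "proj_pt v \<in> curve_pts d F"
  then obtain v' where v': "proj_pt v = proj_pt v'" "hom_eval d F v' = 0"
    by (auto simp: curve_pts_def)
  then obtain c where "v = sm c v'" using pp_eq by blast
  thus "hom_eval d F v = 0" using v' by (simp add: hom_sm)
next
  assume "hom_eval d F v = 0"
  thus "proj_pt v \<in> curve_pts d F" using assms unfolding curve_pts_def by blast
qed

lemma fq_line: "is_fq_line l \<longleftrightarrow> (\<exists>M. M \<noteq> (0,0,0) \<and> l = lp M)"
  unfolding is_fq_line_def by auto

lemma fermat:
  fixes x :: "'a::{finite,field}"
  assumes "x \<noteq> 0"
  shows "x ^ (card (UNIV::'a set) - 1) = 1"
proof -
  let ?S = "UNIV - {0::'a}"
  have bij: "bij_betw (\<lambda>y. x * y) ?S ?S"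
    using assms by (auto simp: bij_betw_def inj_on_def intro!: image_eqI[of _ _ "y / x" for y])
  have "prod (\<lambda>y. y) ?S = prod (\<lambda>y. x * y) ?S"
    using prod.reindex_bij_betw[OF bij, of "\<lambda>y. y"] by simp
  also have "\<dots> = x ^ card ?S * prod (\<lambda>y. y) ?S" by (simp add: prod.distrib)
  finally have "x ^ card ?S = 1"
    by (metis (no_types, lifting) DiffD2 finite mult_cancel_right1 prod_zero_iff singletonI)
  moreover have "card ?S = card (UNIV::'a set) - 1" by (simp add: card_Diff_subset)
  ultimately show ?thesis by simp
qed


definition mkp :: "(nat \<Rightarrow> 'a::field) \<Rightarrow> nat \<Rightarrow> 'a poly" where
  "mkp a n = (\<Sum>k\<le>n. monom (a k) k)"

lemma poly_mkp: "poly (mkp a n) x = (\<Sum>k\<le>n. a k * x ^ k)"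
  by (simp add: mkp_def poly_sum poly_monom)

lemma degree_mkp: "degree (mkp a n) \<le> n"
  unfolding mkp_def by (rule degree_sum_le) (auto intro: order.trans[OF degree_monom_le])

lemma coeff_mkp: "coeff (mkp a n) i = (if i \<le> n then a i else 0)"
  by (simp add: mkp_def coeff_sum coeff_monom)

lemma coeffs_unique:
  fixes a a' :: "nat \<Rightarrow> 'a::{finite,field}"
  assumes "n < card (UNIV::'a set)"
    and "\<And>x. (\<Sum>k\<le>n. a k * x ^ k) = (\<Sum>k\<le>n. a' k * x ^ k)"
    and "k \<le> n"
  shows "a k = a' k"
proof -
  have "mkp a n = mkp a' n"
    by (rule poly_eqI_degree[where A=UNIV]) (use assms degree_mkp[of a n] degree_mkp[of a' n] in \<open>auto simp: poly_mkp\<close>)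
  hence "coeff (mkp a n) k = coeff (mkp a' n) k" by simp
  thus ?thesis using assms(3) by (simp add: coeff_mkp)
qed

lemma coeffs_vanish:
  fixes a :: "nat \<Rightarrow> 'a::{finite,field}"
  assumes "card (UNIV::'a set) = q" "d = q - 1" "2 \<le> q"
    and "\<And>x. x \<noteq> 0 \<Longrightarrow> (\<Sum>k\<le>d. a k * x ^ k) = 0"
    and "1 \<le> k" "k < d"
  shows "a k = 0"
proof -
  define h where "h = (\<lambda>k. if k = 0 then 0 else if k = d then a d + a 0 else a k)"
  have d1: "d \<ge> 1" using assms by simp
  have hx: "(\<Sum>k\<le>d. h k * x ^ k) = (\<Sum>k\<le>d. a k * x ^ k) + a 0 * x ^ d - a 0" for x
  proof -
    have "\<And>k. h k * x ^ k = a k * x ^ k + (if k = d then a 0 * x ^ d else 0) - (if k = 0 then a 0 else 0)"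
      using d1 by (auto simp: h_def algebra_simps)
    hence "(\<Sum>k\<le>d. h k * x ^ k) = (\<Sum>k\<le>d. a k * x ^ k + (if k = d then a 0 * x ^ d else 0) - (if k = 0 then a 0 else 0))"
      by simp
    also have "\<dots> = (\<Sum>k\<le>d. a k * x ^ k) + a 0 * x ^ d - a 0"
      by (simp add: sum.distrib sum_subtractf)
    finally show ?thesis .
  qed
  have "\<And>x. (\<Sum>k\<le>d. h k * x ^ k) = (\<Sum>k\<le>d. (\<lambda>_. 0) k * x ^ k)"
  proof -
    fix x :: 'a
    show "(\<Sum>k\<le>d. h k * x ^ k) = (\<Sum>k\<le>d. (\<lambda>_. 0) k * x ^ k)"
    proof (cases "x = 0")
      case True
      then show ?thesis using d1 by (auto simp: h_def power_0_left intro!: sum.neutral)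
    next
      case False
      then have "x ^ d = 1" using fermat[OF False] assms by simp
      then show ?thesis using hx[of x] assms(4)[OF False] by simp
    qed
  qed
  hence "h k = 0" using coeffs_unique[of d h "\<lambda>_. 0" k] assms by simp
  thus ?thesis using assms by (simp add: h_def)
qed

lemma poly_pp_expand:
  fixes PP :: "'a::field poly poly"
  assumes "degree PP \<le> d"
  shows "poly (poly PP [:m:]) b = (\<Sum>k\<le>d. poly (coeff PP k) b * m ^ k)"
proof -
  have "poly PP [:m:] = (\<Sum>k\<le>d. coeff PP k * [:m:] ^ k)"
    unfolding poly_altdef
    by (rule sum.mono_neutral_left) (use assms in \<open>auto simp: coeff_eq_0\<close>)
  thus ?thesis by (simp add: poly_sum)
qed

definition good :: "'a::field poly poly \<Rightarrow> bool" where
  "good P \<longleftrightarrow> (\<forall>k. degree (coeff P k) \<le> k)"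

lemma good_mult: "good P \<Longrightarrow> good Q \<Longrightarrow> good (P * Q)"
  unfolding good_def coeff_mult
  apply (intro allI degree_sum_le, simp)
  apply (rule order.trans[OF degree_mult_le])
  by (metis add_le_mono le_add_diff_inverse atMost_iff)

lemma good_one: "good 1"
  unfolding good_def by (simp add: coeff_1)

lemma good_pow: "good P \<Longrightarrow> good (P ^ n)"
  by (induction n) (auto intro: good_mult good_one)

lemma good_sum: "(\<And>i. i \<in> A \<Longrightarrow> good (f i)) \<Longrightarrow> good (sum f A)"
  unfolding good_def coeff_sum
  by (cases "finite A") (auto intro!: degree_sum_le)

lemma good_const: "good [:[:c:]:]"
  unfolding good_def by (simp add: coeff_pCons split: nat.split)

lemma good_lin: "good [:[:c:], [:a, b:]:]"
  unfolding good_def by (simp add: coeff_pCons split: nat.split)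


lemma poly_lin: "poly (poly [:[:c:], [:a, b:]:] [:m:]) x = c + m * (a + x * b)"
  by (simp add: algebra_simps)

lemma exists_PP:
  fixes F :: "nat \<Rightarrow> nat \<Rightarrow> 'a::field"
  shows "\<exists>PP. (\<forall>m b. hom_eval d F (vadd w (sm m (vadd u1 (sm b u2)))) = poly (poly PP [:m:]) b)
           \<and> good PP \<and> degree PP \<le> d"
proof -
  obtain w1 w2 w3 where w: "w = (w1,w2,w3)" by (cases w)
  obtain a1 a2 a3 where u1: "u1 = (a1,a2,a3)" by (cases u1)
  obtain b1 b2 b3 where u2: "u2 = (b1,b2,b3)" by (cases u2)
  define X1 where "X1 = [:[:w1:], [:a1, b1:]:]"
  define X2 where "X2 = [:[:w2:], [:a2, b2:]:]"
  define X3 where "X3 = [:[:w3:], [:a3, b3:]:]"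
  define PP where "PP = (\<Sum>i\<le>d. \<Sum>j\<le>d-i. [:[:F i j:]:] * X1^i * X2^j * X3^(d-i-j))"
  have "good PP" unfolding PP_def X1_def X2_def X3_def
    by (intro good_sum good_mult good_pow good_const good_lin)
  moreover have "degree PP \<le> d"
  proof -
    have dX: "degree X1 \<le> 1" "degree X2 \<le> 1" "degree X3 \<le> 1"
      by (simp_all add: X1_def X2_def X3_def)
    have "degree ([:[:F i j:]:] * X1^i * X2^j * X3^(d-i-j)) \<le> d" if "i \<le> d" "j \<le> d - i" for i j
    proof -
      have "degree ([:[:F i j:]:] * X1^i * X2^j * X3^(d-i-j)) \<le>
            degree ([:[:F i j:]:]) + degree X1 * i + degree X2 * j + degree X3 * (d-i-j)"
        by (intro order.trans[OF degree_mult_le] add_mono degree_power_le order.refl) 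
      also have "\<dots> \<le> 0 + 1 * i + 1 * j + 1 * (d-i-j)"
        by (intro add_mono mult_right_mono dX) simp_all
      also have "\<dots> = d" using that by simp
      finally show ?thesis .
    qed
    thus ?thesis unfolding PP_def by (intro degree_sum_le) auto
  qed
  moreover have "hom_eval d F (vadd w (sm m (vadd u1 (sm b u2)))) = poly (poly PP [:m:]) b" for m b
    by (simp add: PP_def X1_def X2_def X3_def w u1 u2 hom_eval_def poly_sum poly_lin mult.assoc del: poly_pCons)
  ultimately show ?thesis by blast
qed


lemma vadd_sm0[simp]: "vadd x (sm 0 y) = x"
  by (cases x; cases y) simp

lemma vadd_cancel: "vadd w X = w \<Longrightarrow> X = (0,0,0)"
  by (cases w; cases X) simp

lemma dot_zero: "dot L (0,0,0) = 0"
  by (cases L) simp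

lemma shift_h:
  fixes e :: "nat \<Rightarrow> 'a::field"
  assumes "d \<ge> 1" "x ^ d = 1"
  shows "(\<Sum>k\<le>d. (if k = 0 then 0 else if k = d then e d + e 0 else e k) * x ^ k) = (\<Sum>k\<le>d. e k * x ^ k)"
proof -
  have "\<And>k. (if k = 0 then 0 else if k = d then e d + e 0 else e k) * x ^ k
      = e k * x ^ k + (if k = d then e 0 * x ^ d else 0) - (if k = 0 then e 0 else 0)"
    using assms by (auto simp: algebra_simps)
  hence "(\<Sum>k\<le>d. (if k = 0 then 0 else if k = d then e d + e 0 else e k) * x ^ k)
      = (\<Sum>k\<le>d. e k * x ^ k + (if k = d then e 0 * x ^ d else 0) - (if k = 0 then e 0 else 0))"
    by simp
  also have "\<dots> = (\<Sum>k\<le>d. e k * x ^ k) + e 0 * x ^ d - e 0"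
    by (simp add: sum.distrib sum_subtractf)
  finally show ?thesis using assms by simp
qed


theorem proposition3p8:
  fixes F :: "nat \<Rightarrow> nat \<Rightarrow> 'a::{finite, field}"
    and q t :: nat
    and Q0 :: "('a \<times> 'a \<times> 'a) set"
    and linf l :: "('a \<times> 'a \<times> 'a) set set"
    and Ls :: "('a \<times> 'a \<times> 'a) set set set"
  assumes "card (UNIV :: 'a set) = q" and "q \<ge> 5"
    and "hom_nonzero (q - 1) F"
    and "\<not> has_linear_component (q - 1) F"
    and "card (curve_pts (q - 1) F) = (q - 1)^2"
    and "Q0 \<in> P2 - curve_pts (q - 1) F"
    and "is_fq_line linf" and "Q0 \<notin> linf"
    and "card Ls = t" and "2 \<le> t" and "t \<le> q - 1"
    and "\<forall>li\<in>Ls. is_fq_line li \<and> Q0 \<in> li \<and> li - ({Q0} \<union> linf) \<subseteq> curve_pts (q - 1) F"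
    and "is_fq_line l" and "Q0 \<in> l" and "l \<notin> Ls"
    and "card ((l - linf) \<inter> curve_pts (q - 1) F) \<ge> q - t"
  shows "l - ({Q0} \<union> linf) \<subseteq> curve_pts (q - 1) F"
proof -
  define d where "d = q - 1"
  note A = assms[folded d_def]
  let ?X = "curve_pts d F"
  let ?hv = "hom_eval d F"
  have q: "card (UNIV :: 'a set) = q" "q \<ge> 5" by (fact assms(1)) (fact assms(2))
  have dq: "d < q" "d \<ge> 1" "d = q - 1" using q by (auto simp: d_def)
  obtain w where w0: "w \<noteq> (0,0,0)" and Q0: "Q0 = proj_pt w" using A(6) by (auto simp: P2_def)
  have hw: "?hv w \<noteq> 0" using A(6) curve_mem[OF w0] Q0 by auto
  obtain L where L0: "L \<noteq> (0,0,0)" "linf = lp L" using A(7) fq_line by blast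
  have Lw: "dot L w \<noteq> 0" using A(8) lp_mem[OF w0] L0 Q0 by auto
  obtain M where M0: "M \<noteq> (0,0,0)" "l = lp M" using A(13) fq_line by blast
  have Mw: "dot M w = 0" using A(14) lp_mem[OF w0] M0 Q0 by auto
  define r where "r = cross L M"
  have r0: "r \<noteq> (0,0,0)" using LA3[OF Lw Mw M0(1)] r_def by simp
  have Lr: "dot L r = 0" "dot M r = 0" unfolding r_def by (rule dot_cross_self1, rule dot_cross_self2)

  have Lsrep: "\<exists>Mj. Mj \<noteq> (0,0,0) \<and> lj = lp Mj \<and> dot Mj w = 0" if "lj \<in> Ls" for lj
  proof -
    have "is_fq_line lj" "Q0 \<in> lj" using A(12) that by auto
    obtain Mj where "Mj \<noteq> (0,0,0)" "lj = lp Mj" using \<open>is_fq_line lj\<close> unfolding fq_line by blast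
    moreover have "dot Mj w = 0" using \<open>Q0 \<in> lj\<close> lp_mem[OF w0] Q0 \<open>lj = lp Mj\<close> by simp
    ultimately show ?thesis by blast
  qed

  have Lsline: "?hv (vadd w (sm m (cross L Mj))) = 0"
    if "lj \<in> Ls" "lj = lp Mj" "Mj \<noteq> (0,0,0)" "dot Mj w = 0" "m \<noteq> 0" for lj Mj m
  proof -
    define v where "v = vadd w (sm m (cross L Mj))"
    have Lv: "dot L v = dot L w" by (simp add: v_def dot_vadd dot_sm dot_cross_self1)
    have v0: "v \<noteq> (0,0,0)"
    proof
      assume "v = (0,0,0)"
      hence "dot L v = 0" by (simp add: dot_zero)
      thus False using Lv Lw by simp
    qed
    have "proj_pt v \<in> lj" using lp_mem[OF v0] that by (simp add: v_def dot_vadd dot_sm dot_cross_self2)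
    moreover have "proj_pt v \<notin> linf" using lp_mem[OF v0] L0 Lv Lw by simp
    moreover have "proj_pt v \<noteq> Q0"
    proof
      assume "proj_pt v = Q0"
      then obtain c where c: "c \<noteq> 0" "v = sm c w" using pp_eq Q0 by blast
      hence "dot L w = c * dot L w" using Lv by (simp add: dot_sm)
      hence "c = 1" using Lw by simp
      hence "sm m (cross L Mj) = (0,0,0)" using c(2) v_def vadd_cancel by simp
      thus False using that(5) LA3[OF Lw that(4,3)] sm_zero_iff by metis
    qed
    moreover have "lj - ({Q0} \<union> linf) \<subseteq> ?X" using A(12) that(1) by blast
    ultimately have "proj_pt v \<in> ?X" by blast
    thus ?thesis using curve_mem[OF v0] v_def by simp
  qed

  have npar: "\<not> (\<exists>s. cross L Mj = sm s r)"
    if "lj \<in> Ls" "lj = lp Mj" "Mj \<noteq> (0,0,0)" "dot Mj w = 0" for lj Mj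
  proof
    assume "\<exists>s. cross L Mj = sm s r"
    then obtain s where s: "cross L Mj = sm s r" by blast
    have rj0: "cross L Mj \<noteq> (0,0,0)" using LA3[OF Lw that(4,3)] .
    have "lp Mj = lp M"
      by (rule same_line[OF Lw dot_cross_self1 rj0 that(4) dot_cross_self2 that(3) Mw _ M0(1)])
         (simp add: s dot_sm Lr)
    thus False using that A(15) M0 by simp
  qed

  have "Ls \<noteq> {}" using A(9,10) by auto
  then obtain l1 where l1: "l1 \<in> Ls" by blast
  obtain M1 where M1: "M1 \<noteq> (0,0,0)" "l1 = lp M1" "dot M1 w = 0" using Lsrep[OF l1] by blast
  define u1 where "u1 = cross L M1"
  have u1L: "dot L u1 = 0" by (simp add: u1_def dot_cross_self1)
  have notpar: "\<not> (\<exists>s. u1 = sm s r)" using npar[OF l1 M1(2,1,3)] u1_def by simp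

  obtain PP where PP: "\<And>m b. ?hv (vadd w (sm m (vadd u1 (sm b r)))) = poly (poly PP [:m:]) b"
      "good PP" "degree PP \<le> d"
    using exists_PP[of d F w u1 r] by blast
  obtain PP' where PP': "\<And>m b. ?hv (vadd w (sm m (vadd r (sm b u1)))) = poly (poly PP' [:m:]) b"
      "good PP'" "degree PP' \<le> d"
    using exists_PP[of d F w r u1] by blast
  have PPe: "?hv (vadd w (sm m (vadd u1 (sm b r)))) = (\<Sum>k\<le>d. poly (coeff PP k) b * m ^ k)" for m b
    using PP(1) poly_pp_expand[OF PP(3)] by simp
  have PPe': "?hv (vadd w (sm m (vadd r (sm b u1)))) = (\<Sum>k\<le>d. poly (coeff PP' k) b * m ^ k)" for m b
    using PP'(1) poly_pp_expand[OF PP'(3)] by simp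

  define B where "B lj = (SOME b. \<exists>Mj \<alpha>. Mj \<noteq> (0,0,0) \<and> lj = lp Mj \<and> dot Mj w = 0 \<and> \<alpha> \<noteq> 0
                      \<and> cross L Mj = sm \<alpha> (vadd u1 (sm b r)))" for lj
  have Bspec: "\<exists>Mj \<alpha>. Mj \<noteq> (0,0,0) \<and> lj = lp Mj \<and> dot Mj w = 0 \<and> \<alpha> \<noteq> 0
                      \<and> cross L Mj = sm \<alpha> (vadd u1 (sm (B lj) r))" if ljL: "lj \<in> Ls" for lj
  proof -
    obtain Mj where Mj: "Mj \<noteq> (0,0,0)" "lj = lp Mj" "dot Mj w = 0" using Lsrep[OF ljL] by blast
    obtain a b where ab: "cross L Mj = vadd (sm a u1) (sm b r)"
      using span_ker[OF Lw u1L Lr(1) r0 notpar dot_cross_self1] by blast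
    have "a \<noteq> 0"
    proof
      assume "a = 0"
      hence "cross L Mj = sm b r" using ab by (cases u1; cases r) simp
      thus False using npar[OF ljL Mj(2,1,3)] by blast
    qed
    hence "cross L Mj = sm a (vadd u1 (sm (b/a) r))" using ab
      by (cases u1; cases r) (simp add: field_simps)
    hence "\<exists>b. \<exists>Mj \<alpha>. Mj \<noteq> (0,0,0) \<and> lj = lp Mj \<and> dot Mj w = 0 \<and> \<alpha> \<noteq> 0
                      \<and> cross L Mj = sm \<alpha> (vadd u1 (sm b r))" using Mj \<open>a \<noteq> 0\<close> by blast
    thus ?thesis unfolding B_def by (rule someI_ex)
  qed
  have C0: "coeff PP k = 0" if k: "1 \<le> k" "k < t" for k
  proof -
    have roots: "poly (coeff PP k) (B lj) = 0" if ljL: "lj \<in> Ls" for lj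
    proof -
      obtain Mj \<alpha> where Mj: "Mj \<noteq> (0,0,0)" "lj = lp Mj" "dot Mj w = 0" "\<alpha> \<noteq> 0"
        "cross L Mj = sm \<alpha> (vadd u1 (sm (B lj) r))" using Bspec[OF ljL] by blast
      have "(\<Sum>k\<le>d. (poly (coeff PP k) (B lj) * \<alpha> ^ k) * m ^ k) = 0" if "m \<noteq> 0" for m
      proof -
        have "0 = ?hv (vadd w (sm m (cross L Mj)))" using Lsline[OF \<open>lj \<in> Ls\<close> Mj(2,1,3) that] by simp
        also have "\<dots> = ?hv (vadd w (sm (m * \<alpha>) (vadd u1 (sm (B lj) r))))" by (simp add: Mj(5) sm_sm)
        also have "\<dots> = (\<Sum>k\<le>d. (poly (coeff PP k) (B lj) * \<alpha> ^ k) * m ^ k)"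
          by (simp add: PPe power_mult_distrib mult_ac)
        finally show ?thesis by simp
      qed
      hence "poly (coeff PP k) (B lj) * \<alpha> ^ k = 0"
        using coeffs_vanish[OF q(1) dq(3), of "\<lambda>k. poly (coeff PP k) (B lj) * \<alpha> ^ k" k] q k A(11) by auto
      thus ?thesis using Mj(4) by simp
    qed
    have inj: "inj_on B Ls"
    proof (rule inj_onI)
      fix x y assume xy: "x \<in> Ls" "y \<in> Ls" "B x = B y"
      obtain Mx ax where Mx: "Mx \<noteq> (0,0,0)" "x = lp Mx" "dot Mx w = 0" "ax \<noteq> 0"
        "cross L Mx = sm ax (vadd u1 (sm (B x) r))" using Bspec[OF xy(1)] by blast
      obtain My ay where My: "My \<noteq> (0,0,0)" "y = lp My" "dot My w = 0" "ay \<noteq> 0"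
        "cross L My = sm ay (vadd u1 (sm (B y) r))" using Bspec[OF xy(2)] by blast
      have My5: "cross L My = sm ay (vadd u1 (sm (B x) r))" using My(5) xy(3) by simp
      define V where "V = vadd u1 (sm (B x) r)"
      have "ax * dot Mx V = 0" using dot_cross_self2[of Mx L] Mx(5) by (simp add: dot_sm V_def)
      hence MxV: "dot Mx V = 0" using Mx(4) by simp
      have ry0: "cross L My \<noteq> (0,0,0)" using LA3[OF Lw My(3,1)] .
      have "lp Mx = lp My"
        by (rule same_line[OF Lw dot_cross_self1 ry0 Mx(3) _ Mx(1) My(3) dot_cross_self2 My(1)])
           (simp add: My5 dot_sm MxV[unfolded V_def])
      thus "x = y" using Mx(2) My(2) by simp
    qed
    have "degree (coeff PP k) \<le> k" using PP(2) good_def by blast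
    have "coeff PP k = 0"
    proof (rule poly_eqI_degree[of "B ` Ls"])
      show "\<And>x. x \<in> B ` Ls \<Longrightarrow> poly (coeff PP k) x = poly 0 x" using roots by auto
      show "degree (coeff PP k) < card (B ` Ls)"
        using card_image[OF inj] A(9) \<open>degree (coeff PP k) \<le> k\<close> k by simp
      show "degree 0 < card (B ` Ls)" using card_image[OF inj] A(9,10) by simp
    qed
    thus ?thesis .
  qed

  have C0': "coeff PP' k = 0" if k: "1 \<le> k" "k < t" for k
  proof -
    have roots: "poly (coeff PP' k) b = 0" if "b \<noteq> 0" for b
    proof -
      have "(\<Sum>k\<le>d. poly (coeff PP' k) b * m ^ k) = (\<Sum>k\<le>d. (poly (coeff PP k) (inverse b) * b ^ k) * m ^ k)" for m
      proof -
        have "vadd w (sm m (vadd r (sm b u1))) = vadd w (sm (b * m) (vadd u1 (sm (inverse b) r)))"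
          using \<open>b \<noteq> 0\<close> by (cases w; cases r; cases u1) (simp add: field_simps)
        thus ?thesis using PPe'[of m b] PPe[of "b*m" "inverse b"]
          by (simp add: power_mult_distrib mult_ac)
      qed
      hence "poly (coeff PP' k) b = poly (coeff PP k) (inverse b) * b ^ k"
        using coeffs_unique[of d "\<lambda>k. poly (coeff PP' k) b" "\<lambda>k. poly (coeff PP k) (inverse b) * b ^ k" k]
          dq q k A(11) by auto
      thus ?thesis using C0[OF k] by simp
    qed
    have "degree (coeff PP' k) \<le> k" using PP'(2) good_def by blast
    have cardnz: "card (UNIV - {0::'a}) = q - 1" using q by (simp add: card_Diff_subset)
    show ?thesis
    proof (rule poly_eqI_degree[of "UNIV - {0}"])
      show "\<And>x. x \<in> UNIV - {0} \<Longrightarrow> poly (coeff PP' k) x = poly 0 x" using roots by auto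
      show "degree (coeff PP' k) < card (UNIV - {0::'a})"
        using cardnz \<open>degree (coeff PP' k) \<le> k\<close> k A(11) dq by simp
      show "degree 0 < card (UNIV - {0::'a})" using cardnz q by simp
    qed
  qed

  define e where "e k = poly (coeff PP' k) 0" for k
  have ge: "?hv (vadd w (sm m r)) = (\<Sum>k\<le>d. e k * m ^ k)" for m
    using PPe'[of m 0] by (simp add: e_def)
  have e0: "e k = 0" if "1 \<le> k" "k < t" for k using C0'[OF that] by (simp add: e_def)

  have decomp: "\<exists>c m. c \<noteq> 0 \<and> m \<noteq> 0 \<and> v = sm c (vadd w (sm m r))"
    if dv: "v \<noteq> (0,0,0)" "dot M v = 0" "dot L v \<noteq> 0" "proj_pt v \<noteq> Q0" for v
  proof -
    define c where "c = dot L v / dot L w"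
    have c0: "c \<noteq> 0" using dv(3) Lw by (simp add: c_def)
    obtain s where s: "v = vadd (sm c w) (sm s r)" using span_l[OF Lw Mw M0(1) dv(2)] r_def c_def by auto
    have "s \<noteq> 0"
    proof
      assume "s = 0"
      hence "v = sm c w" using s by simp
      hence "proj_pt v = Q0" using Q0 pp_sm[OF c0] by simp
      thus False using dv(4) by simp
    qed
    have "v = sm c (vadd w (sm (s/c) r))" using s c0 by (cases w; cases r) (simp add: field_simps)
    moreover have "s / c \<noteq> 0" using c0 \<open>s \<noteq> 0\<close> by simp
    ultimately show ?thesis using c0 by blast
  qed

  define Rt where "Rt = {m. m \<noteq> 0 \<and> ?hv (vadd w (sm m r)) = 0}"
  have sub: "(l - linf) \<inter> ?X \<subseteq> (\<lambda>m. proj_pt (vadd w (sm m r))) ` Rt"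
  proof
    fix P assume P: "P \<in> (l - linf) \<inter> ?X"
    obtain v where v: "v \<noteq> (0,0,0)" "P = proj_pt v" "dot M v = 0" using P M0(2) lp_memE by blast
    have Lv: "dot L v \<noteq> 0" using P v lp_mem[OF v(1)] L0 by auto
    have hv: "?hv v = 0" using P v curve_mem[OF v(1)] by auto
    have "P \<noteq> Q0" using P A(6) by auto
    then obtain c m where cm: "c \<noteq> 0" "m \<noteq> 0" "v = sm c (vadd w (sm m r))"
      using decomp[OF v(1,3) Lv] v(2) by blast
    have "?hv (vadd w (sm m r)) = 0" using hv cm by (simp add: hom_sm)
    hence "m \<in> Rt" using cm Rt_def by simp
    moreover have "P = proj_pt (vadd w (sm m r))" using v(2) cm pp_sm by simp
    ultimately show "P \<in> (\<lambda>m. proj_pt (vadd w (sm m r))) ` Rt" by blast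
  qed
  have cardRt: "card Rt \<ge> q - t"
  proof -
    have "q - t \<le> card ((l - linf) \<inter> ?X)" using A(16) .
    also have "\<dots> \<le> card ((\<lambda>m. proj_pt (vadd w (sm m r))) ` Rt)"
      by (rule card_mono[OF _ sub]) simp
    also have "\<dots> \<le> card Rt" by (rule card_image_le) simp
    finally show ?thesis .
  qed

  define h where "h k = (if k = 0 then 0 else if k = d then e d + e 0 else e k)" for k
  define Pq where "Pq = (\<Sum>k\<le>d. monom (h k) (k - t))"
  have Pqe: "poly Pq m * m ^ t = (\<Sum>k\<le>d. h k * m ^ k)" for m
  proof -
    have "poly Pq m * m ^ t = (\<Sum>k\<le>d. h k * m ^ (k - t) * m ^ t)"
      by (simp add: Pq_def poly_sum poly_monom sum_distrib_right)
    also have "\<dots> = (\<Sum>k\<le>d. h k * m ^ k)"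
    proof (rule sum.cong[OF refl])
      fix k assume "k \<in> {..d}"
      show "h k * m ^ (k - t) * m ^ t = h k * m ^ k"
      proof (cases "k < t")
        case True
        then have "h k = 0" using e0 A(11) by (auto simp: h_def)
        then show ?thesis by simp
      next
        case False
        then have "m ^ (k - t) * m ^ t = m ^ k" by (simp add: power_add[symmetric])
        then show ?thesis by (simp add: mult.assoc)
      qed
    qed
    finally show ?thesis .
  qed
  have hsum: "(\<Sum>k\<le>d. h k * m ^ k) = (\<Sum>k\<le>d. e k * m ^ k)" if "m \<noteq> 0" for m
  proof -
    have "m ^ d = 1" using fermat[OF that] q dq by simp
    thus ?thesis unfolding h_def using shift_h[OF dq(2)] by blast
  qed
  have "Pq = 0"
  proof (rule poly_eqI_degree[of Rt])
    show "\<And>x. x \<in> Rt \<Longrightarrow> poly Pq x = poly 0 x"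
    proof -
      fix x assume "x \<in> Rt"
      hence "x \<noteq> 0" "(\<Sum>k\<le>d. e k * x ^ k) = 0" using ge Rt_def by auto
      hence "poly Pq x * x ^ t = 0" using Pqe hsum by simp
      thus "poly Pq x = poly 0 x" using \<open>x \<noteq> 0\<close> by simp
    qed
    have "degree Pq \<le> d - t" unfolding Pq_def
      by (rule degree_sum_le) (auto intro: order.trans[OF degree_monom_le])
    thus "degree Pq < card Rt" using cardRt dq A(11) by linarith
    show "degree 0 < card Rt" using cardRt dq A(11) by simp
  qed
  hence allv: "?hv (vadd w (sm m r)) = 0" if "m \<noteq> 0" for m
    using Pqe[of m] hsum[OF that] ge[of m] by simp

  show ?thesis
  proof
    fix P assume P: "P \<in> l - ({Q0} \<union> linf)"
    obtain v where v: "v \<noteq> (0,0,0)" "P = proj_pt v" "dot M v = 0" using P M0(2) lp_memE by blast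
    have Lv: "dot L v \<noteq> 0" using P v lp_mem[OF v(1)] L0 by auto
    have "P \<noteq> Q0" using P by auto
    then obtain c m where cm: "c \<noteq> 0" "m \<noteq> 0" "v = sm c (vadd w (sm m r))"
      using decomp[OF v(1,3) Lv] v(2) by blast
    have "?hv v = 0" using cm allv by (simp add: hom_sm)
    thus "P \<in> curve_pts (q - 1) F" using curve_mem[OF v(1)] v(2) d_def by simp
  qed
qed

end
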